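(* For every $m\ge2$, the weight-$m$ part of the first Lie algebra homology of $\Lambda_1(\mathbb{Q}\mathrm{Tree}_2)$ is nonzero: $H_1(\Lambda_1(\mathbb{Q}\mathrm{Tree}_2))_{(m)}\neq0$. Equivalently, $\mathbb{Q}\mathrm{Tree}_2((m+1))$ is not contained in the derived subalgebra $[\Lambda_1(\mathbb{Q}\mathrm{Tree}_2),\Lambda_1(\mathbb{Q}\mathrm{Tree}_2)]$.
   Context: $\mathrm{Tree}_2((m))$, $m\ge1$, is the set of planar binary rooted trees with one root and $m$ leaves labeled $1,\dots,m$ from left to right (each internal vertex has exactly two inputs), equivalently full parenthesizations of $12\cdots m$; $\mathrm{Tree}_2((1))=\{1\}$. Composition $S\circ_iT$ grafts the root of $T$ onto the $i$-th leaf of $S$. Let $\Lambda_1(\mathbb{Q}\mathrm{Tree}_2)=\bigoplus_{m\ge2}\mathbb{Q}\mathrm{Tree}_2((m))$ with Lie bracket $[c,d]=\sum_{t=1}^{j}d\circ_tc-\sum_{s=1}^{k}c\circ_sd$ for $c\in\mathrm{Tree}_2((k))$, $d\in\mathrm{Tree}_2((j))$, extended bilinearly. Give $\mathbb{Q}\mathrm{Tree}_2((m))$ weight $m-1$ (the eigenvalue of the adjoint action of the unit tree); the Chevalley–Eilenberg chain complex decomposes by total weight, and $H_1(\cdot)_{(m)}$ denotes the weight-$m$ part of $H_1$, i.e. of the abelianization $\Lambda_1/[\Lambda_1,\Lambda_1]$. *)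

theory Defs
  imports Complex_Main "HOL-Library.Function_Algebras"
begin

text \<open>Planar binary rooted trees; leaves are numbered 1..m from left to right.
  Tree_2((1)) = {BLeaf}.\<close>
datatype btree = BLeaf | BNode btree btree

fun leaves :: "btree \<Rightarrow> nat" where
  "leaves BLeaf = 1"
| "leaves (BNode l r) = leaves l + leaves r"

text \<open>graft S i T = S \<circ>_i T : graft the root of T onto the i-th leaf of S (1 \<le> i \<le> leaves S).\<close>
fun graft :: "btree \<Rightarrow> nat \<Rightarrow> btree \<Rightarrow> btree" where
  "graft BLeaf i T = (if i = 1 then T else BLeaf)"
| "graft (BNode l r) i T =
     (if i \<le> leaves l then BNode (graft l i T) r
      else BNode l (graft r (i - leaves l) T))"

text \<open>Vectors of the free Q-vector space on trees: finitely supported functions.\<close>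
type_synonym vec = "btree \<Rightarrow> rat"

definition vscale :: "rat \<Rightarrow> vec \<Rightarrow> vec" where
  "vscale r f = (\<lambda>t. r * f t)"

definition supp :: "vec \<Rightarrow> btree set" where
  "supp f = {t. f t \<noteq> 0}"

definition bas :: "btree \<Rightarrow> vec" where
  "bas T = (\<lambda>s. if s = T then 1 else 0)"

definition QTree :: "nat \<Rightarrow> vec set" where
  "QTree m = {f. finite (supp f) \<and> (\<forall>t\<in>supp f. leaves t = m)}"

definition Lambda1 :: "vec set" where
  "Lambda1 = {f. finite (supp f) \<and> (\<forall>t\<in>supp f. 2 \<le> leaves t)}"

definition br_basis :: "btree \<Rightarrow> btree \<Rightarrow> vec" where
  "br_basis c d = (\<Sum>t\<in>{1..leaves d}. bas (graft d t c)) - (\<Sum>s\<in>{1..leaves c}. bas (graft c s d))"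

definition lie_br :: "vec \<Rightarrow> vec \<Rightarrow> vec" where
  "lie_br x y = (\<Sum>c\<in>supp x. \<Sum>d\<in>supp y. vscale (x c * y d) (br_basis c d))"

definition derived :: "vec set" where
  "derived = module.span vscale {lie_br x y | x y. x \<in> Lambda1 \<and> y \<in> Lambda1}"

end

theory Submission
  imports Defs
begin

lemma sum_app: "(\<Sum>a\<in>A. (f a :: vec)) x = (\<Sum>a\<in>A. f a x)"
  by (induction A rule: infinite_finite_induct) auto

fun isR :: "btree \<Rightarrow> bool" where
  "isR BLeaf = True"
| "isR (BNode l r) = (l = BLeaf \<and> isR r)"

fun rc :: "nat \<Rightarrow> btree" where
  "rc 0 = BLeaf"
| "rc (Suc n) = BNode BLeaf (rc n)"

lemma leaves_pos: "leaves t \<ge> 1"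
  by (induction t) auto

lemma isR_rc: "isR t \<Longrightarrow> t = rc (leaves t - 1)"
proof (induction t)
  case (BNode l r)
  then show ?case using leaves_pos[of r] by (cases "leaves r") auto
qed auto

lemma leaves_graft: "1 \<le> t \<Longrightarrow> t \<le> leaves d \<Longrightarrow> leaves (graft d t c) = leaves d + leaves c - 1"
  by (induction d arbitrary: t) (auto simp: leaves_pos)

lemma graft_nonleaf: "c \<noteq> BLeaf \<Longrightarrow> 1 \<le> t \<Longrightarrow> t \<le> leaves d \<Longrightarrow> graft d t c \<noteq> BLeaf"
  by (induction d arbitrary: t) auto

lemma isR_graft: "c \<noteq> BLeaf \<Longrightarrow> 1 \<le> t \<Longrightarrow> t \<le> leaves d \<Longrightarrow>
   isR (graft d t c) = (isR d \<and> isR c \<and> t = leaves d)"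
proof (induction d arbitrary: t)
  case BLeaf
  then show ?case by auto
next
  case (BNode l r)
  show ?case
  proof (cases "t \<le> leaves l")
    case True
    then show ?thesis using BNode.prems graft_nonleaf[of c t l] leaves_pos[of r] by auto
  next
    case False
    then have "isR (graft r (t - leaves l) c) = (isR r \<and> isR c \<and> t - leaves l = leaves r)"
      using BNode by auto
    then show ?thesis using False BNode.prems by auto
  qed
qed

definition RR :: "nat \<Rightarrow> btree" where "RR m = rc m"

lemma graft_eq_R:
  assumes "c \<noteq> BLeaf" "1 \<le> t" "t \<le> leaves d"
  shows "(graft d t c = rc m) = (isR d \<and> isR c \<and> t = leaves d \<and> leaves d + leaves c - 1 = m + 1)"
proof -
  have lr: "leaves (rc m) = m + 1" by (induction m) auto
  have irc: "isR (rc m)" by (induction m) auto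
  show ?thesis
  proof
    assume h: "graft d t c = rc m"
    then show "isR d \<and> isR c \<and> t = leaves d \<and> leaves d + leaves c - 1 = m + 1"
      using isR_graft[OF assms] irc lr leaves_graft[OF assms(2,3)] by metis
  next
    assume h: "isR d \<and> isR c \<and> t = leaves d \<and> leaves d + leaves c - 1 = m + 1"
    then have "isR (graft d t c)" using isR_graft[OF assms] by auto
    then show "graft d t c = rc m" using isR_rc leaves_graft[OF assms(2,3)] h by fastforce
  qed
qed

lemma sum_ind: "finite A \<Longrightarrow> (\<Sum>t\<in>A. if t = a \<and> P then (1::rat) else 0) = (if a \<in> A \<and> P then 1 else 0)"
  by (cases P) (auto simp: sum.delta)

lemma br_zero:
  assumes "c \<noteq> BLeaf" "d \<noteq> BLeaf"
  shows "br_basis c d (rc m) = 0"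
proof -
  have d1: "leaves d \<ge> 1" "leaves c \<ge> 1" using leaves_pos by auto
  have "(\<Sum>t\<in>{1..leaves d}. bas (graft d t c)) (rc m)
      = (\<Sum>t\<in>{1..leaves d}. if t = leaves d \<and> (isR d \<and> isR c \<and> leaves d + leaves c - 1 = m + 1) then 1 else 0)"
    unfolding sum_app bas_def
  proof (rule sum.cong[OF refl])
    fix t assume "t \<in> {1..leaves d}"
    then have "(graft d t c = rc m) = (isR d \<and> isR c \<and> t = leaves d \<and> leaves d + leaves c - 1 = m + 1)"
      using graft_eq_R[OF assms(1)] by auto
    then show "(if rc m = graft d t c then 1 else 0) = (if t = leaves d \<and> (isR d \<and> isR c \<and> leaves d + leaves c - 1 = m + 1) then (1::rat) else 0)"
      by (auto simp: eq_commute[of "rc m"])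
  qed
  also have "\<dots> = (if isR d \<and> isR c \<and> leaves d + leaves c - 1 = m + 1 then 1 else 0)"
    using d1 by (subst sum_ind) auto
  finally have A: "(\<Sum>t\<in>{1..leaves d}. bas (graft d t c)) (rc m) = (if isR d \<and> isR c \<and> leaves d + leaves c - 1 = m + 1 then 1 else 0)" .
  have "(\<Sum>t\<in>{1..leaves c}. bas (graft c t d)) (rc m)
      = (\<Sum>t\<in>{1..leaves c}. if t = leaves c \<and> (isR c \<and> isR d \<and> leaves c + leaves d - 1 = m + 1) then 1 else 0)"
    unfolding sum_app bas_def
  proof (rule sum.cong[OF refl])
    fix t assume "t \<in> {1..leaves c}"
    then have "(graft c t d = rc m) = (isR c \<and> isR d \<and> t = leaves c \<and> leaves c + leaves d - 1 = m + 1)"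
      using graft_eq_R[OF assms(2)] by auto
    then show "(if rc m = graft c t d then 1 else 0) = (if t = leaves c \<and> (isR c \<and> isR d \<and> leaves c + leaves d - 1 = m + 1) then (1::rat) else 0)"
      by (auto simp: eq_commute[of "rc m"])
  qed
  also have "\<dots> = (if isR c \<and> isR d \<and> leaves c + leaves d - 1 = m + 1 then 1 else 0)"
    using d1 by (subst sum_ind) auto
  finally have B: "(\<Sum>t\<in>{1..leaves c}. bas (graft c t d)) (rc m) = (if isR c \<and> isR d \<and> leaves c + leaves d - 1 = m + 1 then 1 else 0)" .
  show ?thesis unfolding br_basis_def using A B by (auto simp: add.commute)
qed

lemma lie_zero:
  assumes "x \<in> Lambda1" "y \<in> Lambda1"
  shows "lie_br x y (rc m) = 0"
proof -
  have "lie_br x y (rc m) = (\<Sum>c\<in>supp x. \<Sum>d\<in>supp y. x c * y d * br_basis c d (rc m))"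
    unfolding lie_br_def sum_app vscale_def by simp
  also have "\<dots> = 0"
  proof (intro sum.neutral ballI)
    fix c d assume "c \<in> supp x" "d \<in> supp y"
    then have "c \<noteq> BLeaf" "d \<noteq> BLeaf" using assms unfolding Lambda1_def by fastforce+
    then show "x c * y d * br_basis c d (rc m) = 0" using br_zero by simp
  qed
  finally show ?thesis .
qed

interpretation V: module vscale
  by unfold_locales (auto simp: vscale_def algebra_simps fun_eq_iff)

theorem lemma5p2:
  fixes m :: nat
  assumes "2 \<le> m"
  shows "\<not> (QTree (m + 1) \<subseteq> derived)"
proof
  assume h: "QTree (m + 1) \<subseteq> derived"
  have lr: "leaves (rc m) = m + 1" by (induction m) auto
  have "supp (bas (rc m)) = {rc m}" by (auto simp: supp_def bas_def)
  then have "bas (rc m) \<in> QTree (m + 1)" using lr by (simp add: QTree_def)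
  then have "bas (rc m) \<in> derived" using h by auto
  moreover have "derived \<subseteq> {f. f (rc m) = 0}"
    unfolding derived_def
  proof (rule V.span_minimal)
    show "{lie_br x y |x y. x \<in> Lambda1 \<and> y \<in> Lambda1} \<subseteq> {f. f (rc m) = 0}"
      using lie_zero by auto
    show "V.subspace {f. f (rc m) = 0}"
      by (auto simp: V.subspace_def vscale_def)
  qed
  ultimately show False by (auto simp: bas_def)
qed

end
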